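(* Assume $h$ satisfies Assumption 1. If $R\le c/\delta$, then $\hat B^d=B^d$ and $\hat\epsilon(x,i)=0$ for all $i\in\{0,1\}$ and $x=0,1,\dots,B^s$.
   Context: Parameters: $\lambda>0$, $0<\mu_l<\mu_h$, $\delta=\mu_h-\mu_l$, $\Lambda=\lambda+\mu_h$, $R\ge 0$, $c>0$, discount rate $\beta>0$ with the normalization $\Lambda+\beta=1$, and $h:\{0,1,2,\dots\}\to\mathbb{R}$ nondecreasing and convex with $h(0)=0$. Assumption 1: (1) there is $\theta>1$ with $h(x+1)\le\theta h(x)$ for all $x>0$; (2) there exist $\gamma\in[0,1)$ and a positive integer $J$ with $\left(\frac{\Lambda}{\Lambda+\beta}\right)^J[R+c+h(x+J)]\le\gamma[R+c+h(x)]$ for all $x\ge0$. Combined problem finite-horizon values on $S=\{0,1,\dots\}\times\{0,1\}$: $v_0\equiv0$, $v_{n+1}(0,0)=\lambda v_n(0,1)+\mu_h v_n(0,0)$; $v_{n+1}(x,0)=-h(x)+\lambda v_n(x,1)+\mu_l v_n(x-1,0)+\max\{\delta v_n(x,0),-c+\delta v_n(x-1,0)\}$ for $x\ge1$; $v_{n+1}(x,1)=\max\{R+v_{n+1}(x+1,0),v_{n+1}(x,0)\}$. Admission-control subproblem: $\hat v$ defined identically except that the max in the $(x,0)$ equation is replaced by $\delta\hat v_n(x,0)$ (service rate always $\mu_l$). Infinite-horizon values: $v=\lim_n v_n$ and $\hat v=\lim_n\hat v_n$ (pointwise limits, which exist under Assumption 1). $\hat\epsilon(x,i)=v(x,i)-\hat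 v(x,i)$. With $\Delta(x,0)=v(x,0)-v(x+1,0)$, $\hat\Delta(x,0)=\hat v(x,0)-\hat v(x+1,0)$ and $T_f(\theta)=\sup\{k\ge0:f(k)\le\theta\}$ ($\sup\emptyset=-1$, $+\infty$ allowed), the thresholds are $B^s=1+T_{\Delta(\cdot,0)}(c/\delta)$, $B^d=T_{\Delta(\cdot,0)}(R)$ and $\hat B^d=T_{\hat\Delta(\cdot,0)}(R)$. *)

theory Defs
  imports Complex_Main "HOL-Library.Extended_Real"
begin

text \<open>States are pairs (x,i) with x a queue length and i in {0,1}; values are
represented as functions w x i (only i = 0 and i = 1 are meaningful).
The flag ctrl = True gives the combined problem (service-rate control),
ctrl = False gives the admission-control subproblem (rate always mu_l).\<close>

definition vstep :: "bool \<Rightarrow> real \<Rightarrow> real \<Rightarrow> real \<Rightarrow> real \<Rightarrow> real \<Rightarrow> (nat \<Rightarrow> real)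
    \<Rightarrow> (nat \<Rightarrow> nat \<Rightarrow> real) \<Rightarrow> nat \<Rightarrow> nat \<Rightarrow> real" where
  "vstep ctrl lam mul muh R c h w =
    (let d = muh - mul;
         w0 = (\<lambda>x. if x = 0 then lam * w 0 1 + muh * w 0 0
                   else - h x + lam * w x 1 + mul * w (x - 1) 0
                        + (if ctrl then max (d * w x 0) (- c + d * w (x - 1) 0)
                           else d * w x 0))
     in (\<lambda>x i. if i = 0 then w0 x else max (R + w0 (x + 1)) (w0 x)))"

primrec vn :: "bool \<Rightarrow> real \<Rightarrow> real \<Rightarrow> real \<Rightarrow> real \<Rightarrow> real \<Rightarrow> (nat \<Rightarrow> real)
    \<Rightarrow> nat \<Rightarrow> nat \<Rightarrow> nat \<Rightarrow> real" where
  "vn ctrl lam mul muh R c h 0 = (\<lambda>x i. 0)"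
| "vn ctrl lam mul muh R c h (Suc n) = vstep ctrl lam mul muh R c h (vn ctrl lam mul muh R c h n)"

definition vinf :: "bool \<Rightarrow> real \<Rightarrow> real \<Rightarrow> real \<Rightarrow> real \<Rightarrow> real \<Rightarrow> (nat \<Rightarrow> real)
    \<Rightarrow> nat \<Rightarrow> nat \<Rightarrow> real" where
  "vinf ctrl lam mul muh R c h x i = lim (\<lambda>n. vn ctrl lam mul muh R c h n x i)"

definition Tsup :: "(nat \<Rightarrow> real) \<Rightarrow> real \<Rightarrow> ereal" where
  "Tsup f \<theta> = (if {k. f k \<le> \<theta>} = {} then -1
                 else Sup ((\<lambda>k. ereal (real k)) ` {k. f k \<le> \<theta>}))"

end

theory Submission
  imports Defs
begin


lemma max_diff: "\<bar>max p q - max p' q'\<bar> \<le> max \<bar>p - p'\<bar> \<bar>q - q'\<bar>" for p q p' q' :: real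
  by (auto simp: max_def abs_if)

lemma A_form:
  fixes a0 a1 a2 a3 R :: real
  assumes "0 \<le> a0 - a1" "a0 - a1 \<le> a1 - a2" "a1 - a2 \<le> a2 - a3" "0 \<le> R"
  shows "0 \<le> max (R + a1) a0 - max (R + a2) a1 \<and> max (R + a1) a0 - max (R + a2) a1 \<le> max (R + a2) a1 - max (R + a3) a2"
  using assms by (auto simp: max_def)




lemma abs_max_le: "\<bar>max p q\<bar> \<le> max \<bar>p\<bar> \<bar>q\<bar>" for p q :: real
  by (auto simp: max_def abs_if)

locale qm =
  fixes lam mul muh R c \<beta> :: real and h :: "nat \<Rightarrow> real"
  assumes lam_pos: "lam > 0" and mul_pos: "0 < mul" and mul_muh: "mul < muh"
    and R_nonneg: "R \<ge> 0" and c_pos: "c > 0" and beta_pos: "\<beta> > 0"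
    and norm: "lam + muh + \<beta> = 1"
    and h_mono: "\<And>x y. x \<le> y \<Longrightarrow> h x \<le> h y"
    and h_convex: "\<And>x. h (x + 1) - h x \<le> h (x + 2) - h (x + 1)"
    and h_zero: "h 0 = 0"
    and A12: "\<exists>\<gamma> J. 0 \<le> \<gamma> \<and> \<gamma> < 1 \<and> J > 0 \<and>
                 (\<forall>x. ((lam + muh) / (lam + muh + \<beta>)) ^ J * (R + c + h (x + J))
                        \<le> \<gamma> * (R + c + h x))"
begin

abbreviation "V b n \<equiv> vn b lam mul muh R c h n"
abbreviation "vi b \<equiv> vinf b lam mul muh R c h"
definition "Lm = lam + muh"
definition "w y = R + c + h y"
definition "dl = muh - mul"

lemma h_nonneg: "0 \<le> h x" using h_mono[of 0 x] h_zero by simp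
lemma Lm_eq: "Lm = 1 - \<beta>" using norm by (simp add: Lm_def)
lemma Lm_pos: "0 < Lm" using lam_pos mul_pos mul_muh by (simp add: Lm_def)
lemma Lm_lt1: "Lm < 1" using Lm_eq beta_pos by simp
lemma dl_pos: "0 < dl" using mul_muh by (simp add: dl_def)
lemma w_mono: "x \<le> y \<Longrightarrow> w x \<le> w y" using h_mono by (simp add: w_def)
lemma w_pos: "0 < w x" using h_nonneg[of x] R_nonneg c_pos by (simp add: w_def)

lemma V_0[simp]: "V b 0 x i = 0" by simp
declare vn.simps(2)[simp del]

lemma V_Suc0: "V b (Suc n) x 0 = (if x = 0 then lam * V b n 0 1 + muh * V b n 0 0
   else - h x + lam * V b n x 1 + mul * V b n (x - 1) 0
     + (if b then max (dl * V b n x 0) (- c + dl * V b n (x - 1) 0) else dl * V b n x 0))"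
  by (simp add: vstep_def Let_def dl_def vn.simps(2))

lemma V_Suc1: "V b (Suc n) x 1 = max (R + V b (Suc n) (x+1) 0) (V b (Suc n) x 0)"
  by (simp add: vstep_def Let_def dl_def vn.simps(2))

lemma V1_0: "V b (Suc 0) x 0 = (if x = 0 then 0 else - h x)"
  using V_Suc0[of b 0 x] c_pos by (auto simp: max_def)

lemma triple: fixes x1 x2 x3 y1 y2 y3 k1 k2 k3 hh :: real
  shows "\<bar>x1 - y1\<bar> \<le> k1 \<Longrightarrow> \<bar>x2 - y2\<bar> \<le> k2 \<Longrightarrow> \<bar>x3 - y3\<bar> \<le> k3 \<Longrightarrow> \<bar>(-hh + x1 + x2 + x3) - (-hh + y1 + y2 + y3)\<bar> \<le> k1 + k2 + k3"
  by (auto simp: abs_le_iff)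

lemma step_lip:
  fixes a a' e e' f f' K la mu de hh :: real
  assumes "\<bar>a - a'\<bar> \<le> K" "\<bar>e - e'\<bar> \<le> K" "\<bar>f - f'\<bar> \<le> K" "0 \<le> la" "0 \<le> mu" "0 \<le> de"
  shows "\<bar>(- hh + la*a + mu*e + max (de*f) (-c + de*e)) - (- hh + la*a' + mu*e' + max (de*f') (-c + de*e'))\<bar> \<le> (la+mu+de)*K"
    and "\<bar>(- hh + la*a + mu*e + de*f) - (- hh + la*a' + mu*e' + de*f')\<bar> \<le> (la+mu+de)*K"
proof -
  have 1: "\<bar>la*a - la*a'\<bar> \<le> la*K" using assms
    by (metis abs_mult abs_of_nonneg mult_left_mono right_diff_distrib)
  have 2: "\<bar>mu*e - mu*e'\<bar> \<le> mu*K" using assms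
    by (metis abs_mult abs_of_nonneg mult_left_mono right_diff_distrib)
  have 3: "\<bar>de*f - de*f'\<bar> \<le> de*K" using assms
    by (metis abs_mult abs_of_nonneg mult_left_mono right_diff_distrib)
  have 4: "\<bar>de*e - de*e'\<bar> \<le> de*K" using assms
    by (metis abs_mult abs_of_nonneg mult_left_mono right_diff_distrib)
  have 5: "\<bar>max (de*f) (-c + de*e) - max (de*f') (-c + de*e')\<bar> \<le> de*K"
  proof -
    have "max \<bar>de*f - de*f'\<bar> \<bar>(-c + de*e) - (-c + de*e')\<bar> \<le> de*K" using 3 4 by simp
    from order_trans[OF max_diff this] show ?thesis .
  qed
  show "\<bar>(- hh + la*a + mu*e + max (de*f) (-c + de*e)) - (- hh + la*a' + mu*e' + max (de*f') (-c + de*e'))\<bar> \<le> (la+mu+de)*K"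
    using triple[OF 1 2 5, of hh] by (simp add: algebra_simps)
  show "\<bar>(- hh + la*a + mu*e + de*f) - (- hh + la*a' + mu*e' + de*f')\<bar> \<le> (la+mu+de)*K"
    using triple[OF 1 2 3, of hh] by (simp add: algebra_simps)
qed

lemma incr: "(\<forall>x. \<bar>V b (Suc n) x 0 - V b n x 0\<bar> \<le> Lm^n * w (x+n)) \<and>
             (\<forall>x. \<bar>V b (Suc n) x 1 - V b n x 1\<bar> \<le> Lm^n * w (x+n+1))"
proof (induction n)
  case 0
  have a: "\<bar>V b (Suc 0) x 0\<bar> \<le> w x" for x
    using h_nonneg[of x] R_nonneg c_pos unfolding V1_0 by (simp add: w_def h_zero)
  have b: "\<bar>V b (Suc 0) x 1\<bar> \<le> w (x+1)" for x
  proof -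
    have "\<bar>V b (Suc 0) x 1\<bar> \<le> max \<bar>R + V b (Suc 0) (x+1) 0\<bar> \<bar>V b (Suc 0) x 0\<bar>"
      by (simp only: V_Suc1 abs_max_le)
    moreover have "\<bar>R + V b (Suc 0) (x+1) 0\<bar> \<le> w (x+1)"
      using V1_0[of b "x+1"] h_nonneg[of "x+1"] R_nonneg c_pos by (simp add: w_def)
    moreover have "\<bar>V b (Suc 0) x 0\<bar> \<le> w (x+1)" using a[of x] w_mono[of x "x+1"] by simp
    ultimately show ?thesis by simp
  qed
  show ?case using a b by simp
next
  case (Suc n)
  have c0: "\<bar>V b (Suc (Suc n)) x 0 - V b (Suc n) x 0\<bar> \<le> Lm^(Suc n) * w (x + Suc n)" for x
  proof -
    define K where "K = Lm^n * w (x+n+1)"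
    have K1: "\<bar>V b (Suc n) y 0 - V b n y 0\<bar> \<le> K" if "y \<le> x" for y
    proof -
      have "Lm^n * w (y+n) \<le> K" unfolding K_def using Lm_pos that
        by (intro mult_left_mono w_mono) auto
      then show ?thesis using Suc.IH by (meson order_trans)
    qed
    have K2: "\<bar>V b (Suc n) x 1 - V b n x 1\<bar> \<le> K" unfolding K_def using Suc.IH by blast
    have "\<bar>V b (Suc (Suc n)) x 0 - V b (Suc n) x 0\<bar> \<le> Lm * K"
    proof (cases "x = 0")
      case True
      have "\<bar>lam * V b (Suc n) 0 1 + muh * V b (Suc n) 0 0 - (lam * V b n 0 1 + muh * V b n 0 0)\<bar> \<le> (lam + 0 + muh) * K"
        using step_lip(2)[of "V b (Suc n) 0 1" "V b n 0 1" K "V b (Suc n) 0 0" "V b n 0 0" "V b (Suc n) 0 0" "V b n 0 0" lam 0 muh 0]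
          K1[of 0] K2 True lam_pos mul_pos mul_muh by simp
      then show ?thesis using True unfolding V_Suc0[of b "Suc n" x] V_Suc0[of b n x] by (simp add: Lm_def)
    next
      case False
      have e: "lam + mul + dl = Lm" by (simp add: Lm_def dl_def)
      note L = step_lip[of "V b (Suc n) x 1" "V b n x 1" K "V b (Suc n) (x-1) 0" "V b n (x-1) 0" "V b (Suc n) x 0" "V b n x 0" lam mul dl "h x",
        OF K2 K1[OF diff_le_self] K1[OF order_refl]] 
      have L1: "(lam+mul+dl)*K = Lm * K" by (simp only: e)
      show ?thesis
      proof (cases b)
        case True
        have E1: "V b (Suc (Suc n)) x 0 = - h x + lam * V b (Suc n) x 1 + mul * V b (Suc n) (x - 1) 0
           + max (dl * V b (Suc n) x 0) (- c + dl * V b (Suc n) (x - 1) 0)"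
          using V_Suc0[of b "Suc n" x] False True by simp
        have E2: "V b (Suc n) x 0 = - h x + lam * V b n x 1 + mul * V b n (x - 1) 0
           + max (dl * V b n x 0) (- c + dl * V b n (x - 1) 0)"
          using V_Suc0[of b n x] False True by simp
        show ?thesis unfolding arg_cong2[where f="(-)", OF E1 E2] using L(1)[OF less_imp_le[OF lam_pos] less_imp_le[OF mul_pos] less_imp_le[OF dl_pos]] e by simp
      next
        case b: False
        have E1: "V b (Suc (Suc n)) x 0 = - h x + lam * V b (Suc n) x 1 + mul * V b (Suc n) (x - 1) 0
           + dl * V b (Suc n) x 0"
          using V_Suc0[of b "Suc n" x] False b by simp
        have E2: "V b (Suc n) x 0 = - h x + lam * V b n x 1 + mul * V b n (x - 1) 0
           + dl * V b n x 0"
          using V_Suc0[of b n x] False b by simp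
        show ?thesis unfolding arg_cong2[where f="(-)", OF E1 E2] using L(2)[OF less_imp_le[OF lam_pos] less_imp_le[OF mul_pos] less_imp_le[OF dl_pos]] e by simp
      qed
    qed
    also have "\<dots> = Lm^(Suc n) * w (x + Suc n)" by (simp add: K_def)
    finally show ?thesis .
  qed
  have c1: "\<bar>V b (Suc (Suc n)) x 1 - V b (Suc n) x 1\<bar> \<le> Lm^(Suc n) * w (x + Suc n + 1)" for x
  proof -
    have "\<bar>V b (Suc (Suc n)) x 1 - V b (Suc n) x 1\<bar> \<le>
       max \<bar>V b (Suc (Suc n)) (x+1) 0 - V b (Suc n) (x+1) 0\<bar> \<bar>V b (Suc (Suc n)) x 0 - V b (Suc n) x 0\<bar>"
      using max_diff[of "R + V b (Suc (Suc n)) (x+1) 0" "V b (Suc (Suc n)) x 0" "R + V b (Suc n) (x+1) 0" "V b (Suc n) x 0"]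
      by (simp only: V_Suc1) simp
    moreover have "Lm^(Suc n) * w (x + Suc n) \<le> Lm^(Suc n) * w (x + Suc n + 1)"
      using Lm_pos by (intro mult_left_mono w_mono) auto
    ultimately show ?thesis using c0[of x] c0[of "x+1"] by auto
  qed
  show ?case using c0 c1 by blast
qed

end


context qm begin

lemma summ: "summable (\<lambda>k. Lm^k * w (z + k))"
proof -
  obtain \<gamma> J where g: "0 \<le> \<gamma>" "\<gamma> < 1" "J > 0"
    and gJ: "\<And>x. Lm ^ J * w (x + J) \<le> \<gamma> * w x"
    using A12 norm by (auto simp: Lm_def w_def)
  define g where "g = max \<gamma> (1/2)"
  have g0: "0 < g" "g < 1" using g by (auto simp: g_def)
  have gJ': "Lm ^ J * w (x + J) \<le> g * w x" for x
    using gJ[of x] w_pos[of x] by (smt (verit) g_def max.cobounded1 mult_right_mono)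
  have P: "Lm^(m*J) * w (y + m*J) \<le> g^m * w y" for m y
  proof (induction m arbitrary: y)
    case 0 then show ?case by simp
  next
    case (Suc m)
    have "Lm^(Suc m * J) * w (y + Suc m * J) = Lm^J * (Lm^(m*J) * w ((y + J) + m*J))"
      by (simp add: power_add algebra_simps)
    also have "\<dots> \<le> Lm^J * (g^m * w (y+J))"
      using Suc.IH[of "y+J"] Lm_pos by (intro mult_left_mono) auto
    also have "\<dots> = g^m * (Lm^J * w (y+J))" by simp
    also have "\<dots> \<le> g^m * (g * w y)" using gJ'[of y] g0 by (intro mult_left_mono) auto
    finally show ?case by (simp add: mult_ac)
  qed
  define \<rho> where "\<rho> = root J g"
  have \<rho>: "0 < \<rho>" "\<rho> < 1" "\<rho>^J = g" using g0 g(3) by (auto simp: \<rho>_def)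
  have B: "Lm^k * w (z + k) \<le> (w (z+J) / g) * \<rho>^k" for k
  proof -
    define m r where "m = k div J" and "r = k mod J"
    have k: "k = m*J + r" by (simp add: m_def r_def)
    have rJ: "r < J" using g(3) by (simp add: r_def)
    have "Lm^k * w (z + k) = Lm^r * (Lm^(m*J) * w ((z + r) + m*J))"
      by (simp add: k power_add algebra_simps)
    also have "\<dots> \<le> Lm^r * (g^m * w (z + r))"
      using P[of m "z+r"] Lm_pos by (intro mult_left_mono) auto
    also have "\<dots> \<le> 1 * (g^m * w (z + J))"
      using Lm_pos Lm_lt1 g0 w_pos[of "z+r"] rJ w_mono[of "z+r" "z+J"]
      by (intro mult_mono power_le_one mult_left_mono) auto
    also have "g^m = \<rho>^(J*m)" by (simp add: power_mult \<rho>)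
    also have "\<rho>^(J*m) \<le> \<rho>^k / g"
    proof -
      have "k \<le> J*m + J" using k rJ by simp
      then have "\<rho>^(J*m + J) \<le> \<rho>^k" using \<rho> by (intro power_decreasing) auto
      then have "\<rho>^(J*m) * g \<le> \<rho>^k" by (simp add: power_add \<rho>)
      then show ?thesis using g0 by (simp add: field_simps)
    qed
    then have "1 * (\<rho>^(J*m) * w (z + J)) \<le> 1 * (\<rho>^k / g * w (z+J))"
      using w_pos[of "z+J"] by (intro mult_left_mono mult_right_mono) auto
    finally show ?thesis by (simp add: mult_ac)
  qed
  show ?thesis
  proof (rule summable_comparison_test')
    show "summable (\<lambda>k. (w (z+J) / g) * \<rho>^k)"
      using \<rho> by (intro summable_mult summable_geometric) auto
    show "norm (Lm^k * w (z + k)) \<le> (w (z+J) / g) * \<rho>^k" for k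
      using B[of k] Lm_pos w_pos[of "z+k"] by simp
  qed
qed

lemma conv: assumes "i \<le> 1" shows "(\<lambda>n. V b n x i) \<longlonglongrightarrow> vi b x i"
proof -
  define f where "f k = V b (Suc k) x i - V b k x i" for k
  have fb: "norm (f k) \<le> Lm^k * w ((x+1) + k)" for k
  proof (cases "i = 0")
    case True
    then have "\<bar>f k\<bar> \<le> Lm^k * w (x + k)" using incr[of b k] by (simp add: f_def)
    also have "\<dots> \<le> Lm^k * w ((x+1) + k)" using Lm_pos by (intro mult_left_mono w_mono) auto
    finally show ?thesis by simp
  next
    case False
    then have "i = 1" using assms by simp
    have "x + k + 1 = (x+1) + k" by simp
    then show ?thesis using incr[of b k] \<open>i = 1\<close> unfolding f_def by (metis real_norm_def)
  qed
  have sf: "summable f" by (rule summable_comparison_test'[OF summ fb])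
  have tel: "V b n x i = (\<Sum>k<n. f k)" for n
    unfolding f_def by (subst sum_lessThan_telescope) simp
  have "(\<lambda>n. V b n x i) \<longlonglongrightarrow> suminf f" unfolding tel by (rule summable_LIMSEQ[OF sf])
  moreover then have "vi b x i = suminf f" unfolding vinf_def by (rule limI)
  ultimately show ?thesis by simp
qed

lemma conv0: "(\<lambda>n. V b n x 0) \<longlonglongrightarrow> vi b x 0" by (rule conv) simp
lemma conv1: "(\<lambda>n. V b n x 1) \<longlonglongrightarrow> vi b x 1" by (rule conv) simp
lemma conv1': "(\<lambda>n. V b n x (Suc 0)) \<longlonglongrightarrow> vi b x (Suc 0)" using conv1 by simp

lemma bell0: "vi b x 0 = (if x = 0 then lam * vi b 0 1 + muh * vi b 0 0
   else - h x + lam * vi b x 1 + mul * vi b (x - 1) 0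
     + (if b then max (dl * vi b x 0) (- c + dl * vi b (x - 1) 0) else dl * vi b x 0))"
proof -
  have L: "(\<lambda>n. V b (Suc n) x 0) \<longlonglongrightarrow> vi b x 0" by (rule LIMSEQ_Suc[OF conv0])
  have R: "(\<lambda>n. V b (Suc n) x 0) \<longlonglongrightarrow> (if x = 0 then lam * vi b 0 1 + muh * vi b 0 0
   else - h x + lam * vi b x 1 + mul * vi b (x - 1) 0
     + (if b then max (dl * vi b x 0) (- c + dl * vi b (x - 1) 0) else dl * vi b x 0))"
    unfolding V_Suc0
    by (cases "x = 0"; cases b; simp; intro tendsto_intros conv0 conv1')
  show ?thesis using LIMSEQ_unique[OF L R] .
qed

lemma bell1: "vi b x 1 = max (R + vi b (x+1) 0) (vi b x 0)"
proof -
  have L: "(\<lambda>n. V b (Suc n) x 1) \<longlonglongrightarrow> vi b x 1" by (rule LIMSEQ_Suc[OF conv1])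
  have R: "(\<lambda>n. V b (Suc n) x 1) \<longlonglongrightarrow> max (R + vi b (x+1) 0) (vi b x 0)"
    unfolding V_Suc1 by (intro tendsto_intros LIMSEQ_Suc[OF conv0])
  show ?thesis using LIMSEQ_unique[OF L R] .
qed

end



lemma ident1: fixes dl c p q r :: real
  shows "max (dl*q) (-c + dl*p) - max (dl*r) (-c + dl*q) = min (dl*(q - r)) c + max 0 (dl*(p - q) - c)"
  by (auto simp: max_def min_def algebra_simps)

lemma ident0: fixes dl c p r :: real
  shows "dl*p - max (dl*r) (-c + dl*p) = min (dl*(p - r)) c"
  by (auto simp: max_def min_def algebra_simps)

context qm begin

lemma VS0_0: "V b (Suc n) 0 0 = lam * V b n 0 1 + muh * V b n 0 0"
  using V_Suc0[of b n 0] by simp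
lemma VS0_T: "x \<noteq> 0 \<Longrightarrow> V True (Suc n) x 0 = - h x + lam * V True n x 1 + mul * V True n (x - 1) 0
     + max (dl * V True n x 0) (- c + dl * V True n (x - 1) 0)"
  using V_Suc0[of True n x] by simp
lemma VS0_F: "x \<noteq> 0 \<Longrightarrow> V False (Suc n) x 0 = - h x + lam * V False n x 1 + mul * V False n (x - 1) 0
     + dl * V False n x 0"
  using V_Suc0[of False n x] by simp

lemma cmp: "\<forall>x. V False n x 0 \<le> V True n x 0 \<and> V False n x 1 \<le> V True n x 1"
proof (induction n)
  case 0 then show ?case by simp
next
  case (Suc n)
  have c0: "V False (Suc n) x 0 \<le> V True (Suc n) x 0" for x
  proof (cases "x = 0")
    case True
    have "lam * V False n 0 1 \<le> lam * V True n 0 1" using Suc.IH lam_pos by (intro mult_left_mono) auto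
    moreover have "muh * V False n 0 0 \<le> muh * V True n 0 0" using Suc.IH lam_pos mul_pos mul_muh
      by (intro mult_left_mono) auto
    ultimately show ?thesis using True by (simp add: VS0_0)
  next
    case False
    have "lam * V False n x 1 \<le> lam * V True n x 1" using Suc.IH lam_pos by (intro mult_left_mono) auto
    moreover have "mul * V False n (x-1) 0 \<le> mul * V True n (x-1) 0" using Suc.IH mul_pos
      by (intro mult_left_mono) auto
    moreover have "dl * V False n x 0 \<le> dl * V True n x 0" using Suc.IH dl_pos
      by (intro mult_left_mono) auto
    ultimately show ?thesis using False by (simp add: VS0_T VS0_F)
  qed
  have c1: "V False (Suc n) x 1 \<le> V True (Suc n) x 1" for x
    unfolding V_Suc1 using c0[of x] c0[of "x+1"] by (auto simp: max_def)
  show ?case using c0 c1 by blast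
qed

definition "U = lam * R / \<beta>"
lemma U_nonneg: "0 \<le> U" using lam_pos R_nonneg beta_pos by (simp add: U_def)
lemma U_eq: "lam * R + Lm * U = U"
proof -
  have "\<beta> * U = lam * R" using beta_pos by (simp add: U_def)
  moreover have "Lm * U = U - \<beta> * U" by (simp add: Lm_eq algebra_simps)
  ultimately show ?thesis by simp
qed

lemma upper: "\<forall>x. V b n x 0 \<le> U \<and> V b n x 1 \<le> R + U"
proof (induction n)
  case 0 then show ?case using U_nonneg R_nonneg by simp
next
  case (Suc n)
  have c0: "V b (Suc n) x 0 \<le> U" for x
  proof (cases "x = 0")
    case True
    have "lam * V b n 0 1 \<le> lam * (R + U)" using Suc.IH lam_pos by (intro mult_left_mono) auto
    moreover have "muh * V b n 0 0 \<le> muh * U" using Suc.IH lam_pos mul_pos mul_muh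
      by (intro mult_left_mono) auto
    ultimately have "V b (Suc n) x 0 \<le> lam * (R + U) + muh * U" using True by (simp add: VS0_0)
    also have "\<dots> = lam * R + Lm * U" by (simp add: Lm_def algebra_simps)
    finally show ?thesis using U_eq by simp
  next
    case False
    have 1: "lam * V b n x 1 \<le> lam * (R + U)" using Suc.IH lam_pos by (intro mult_left_mono) auto
    have 2: "mul * V b n (x-1) 0 \<le> mul * U" using Suc.IH mul_pos by (intro mult_left_mono) auto
    have 3: "dl * V b n x 0 \<le> dl * U" using Suc.IH dl_pos by (intro mult_left_mono) auto
    have 4: "dl * V b n (x-1) 0 \<le> dl * U" using Suc.IH dl_pos by (intro mult_left_mono) auto
    have "V b (Suc n) x 0 \<le> lam * (R + U) + mul * U + dl * U"
      using 1 2 3 4 False h_nonneg[of x] c_pos by (cases b) (simp_all add: VS0_T VS0_F)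
    also have "\<dots> = lam * R + Lm * U" by (simp add: Lm_def dl_def algebra_simps)
    finally show ?thesis using U_eq by simp
  qed
  have c1: "V b (Suc n) x 1 \<le> R + U" for x
    unfolding V_Suc1 using c0[of x] c0[of "x+1"] R_nonneg by auto
  show ?case using c0 c1 by blast
qed

lemma lower: "\<forall>x. - h x / \<beta> \<le> V b n x 0 \<and> - h x / \<beta> \<le> V b n x 1"
proof (induction n)
  case 0 then show ?case using h_nonneg beta_pos by simp
next
  case (Suc n)
  define t where "t x = h x / \<beta>" for x
  have t0: "t 0 = 0" by (simp add: t_def h_zero)
  have tm: "t (x-1) \<le> t x" for x using h_mono[of "x-1" x] beta_pos by (simp add: t_def divide_right_mono)
  have ht: "h x = \<beta> * t x" for x using beta_pos by (simp add: t_def)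
  have IH: "- t x \<le> V b n x 0" "- t x \<le> V b n x 1" for x using Suc.IH by (auto simp: t_def)
  have c0: "- t x \<le> V b (Suc n) x 0" for x
  proof (cases "x = 0")
    case True
    have "0 \<le> lam * V b n 0 1" using IH[of 0] t0 lam_pos by simp
    moreover have "0 \<le> muh * V b n 0 0" using IH[of 0] t0 lam_pos mul_pos mul_muh by simp
    ultimately show ?thesis using True t0 by (simp add: VS0_0)
  next
    case False
    have 1: "lam * (- t x) \<le> lam * V b n x 1" using IH lam_pos by (intro mult_left_mono) auto
    have 2: "mul * (- t x) \<le> mul * V b n (x-1) 0" using IH[of "x-1"] tm[of x] mul_pos
      by (intro mult_left_mono) auto
    have 3: "dl * (- t x) \<le> dl * V b n x 0" using IH dl_pos by (intro mult_left_mono) auto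
    have "- h x + lam * (- t x) + mul * (- t x) + dl * (- t x) \<le> V b (Suc n) x 0"
      using 1 2 3 False by (cases b) (simp_all add: VS0_T VS0_F)
    moreover have "- h x + lam * (- t x) + mul * (- t x) + dl * (- t x) = - t x"
    proof -
      have "lam + mul + dl = 1 - \<beta>" using Lm_eq by (simp add: Lm_def dl_def)
      then have "lam * t x + mul * t x + dl * t x = t x - \<beta> * t x" by (metis distrib_right left_diff_distrib mult_1)
      then show ?thesis using ht[of x] by simp
    qed
    ultimately show ?thesis by simp
  qed
  have c1: "- t x \<le> V b (Suc n) x 1" for x
    unfolding V_Suc1 using c0[of x] by auto
  show ?case using c0 c1 by (simp add: t_def)
qed

end


context qm begin

definition "dd b n x = V b n x 0 - V b n (x+1) 0"
definition "AA b n x = V b n x 1 - V b n (x+1) 1"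
definition "pp b n x = (if x = 0 then 0 else dd b n (x-1))"
definition "F b hq a p d = hq + lam * a + mul * p + (if b then min (dl * d) c + max 0 (dl * p - c) else dl * d)"

lemma dd_Suc: "dd b (Suc n) x = F b (h (x+1) - h x) (AA b n x) (pp b n x) (dd b n x)"
proof (cases "x = 0")
  case True
  show ?thesis
  proof (cases b)
    case b: True
    have E1: "V b (Suc n) 1 0 = - h 1 + lam * V b n 1 1 + mul * V b n 0 0
     + max (dl * V b n 1 0) (- c + dl * V b n 0 0)" using VS0_T[of 1 n] b by simp
    have "muh * V b n 0 0 = mul * V b n 0 0 + dl * V b n 0 0" by (simp add: dl_def algebra_simps)
    note M = this
    have "dd b (Suc n) 0 = V b (Suc n) 0 0 - V b (Suc n) 1 0" by (simp add: dd_def)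
    also have "\<dots> = (lam * V b n 0 1 + muh * V b n 0 0) - (- h 1 + lam * V b n 1 1 + mul * V b n 0 0
     + max (dl * V b n 1 0) (- c + dl * V b n 0 0))" by (rule arg_cong2[where f="(-)", OF VS0_0 E1])
    also have "\<dots> = h 1 + lam * AA b n 0 + (dl * V b n 0 0 - max (dl * V b n 1 0) (- c + dl * V b n 0 0))"
      using M by (simp add: AA_def algebra_simps)
    also have "\<dots> = h 1 + lam * AA b n 0 + min (dl * dd b n 0) c"
      by (simp only: ident0) (simp add: dd_def)
    finally show ?thesis using True b c_pos by (simp add: F_def pp_def h_zero)
  next
    case b: False
    have E1: "V b (Suc n) 1 0 = - h 1 + lam * V b n 1 1 + mul * V b n 0 0
     + dl * V b n 1 0" using VS0_F[of 1 n] b by simp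
    have "muh * V b n 0 0 = mul * V b n 0 0 + dl * V b n 0 0" by (simp add: dl_def algebra_simps)
    then show ?thesis using True b E1
      by (simp add: dd_def F_def AA_def pp_def VS0_0 h_zero algebra_simps)
  qed
next
  case False
  show ?thesis
  proof (cases b)
    case b: True
    have E0: "V b (Suc n) x 0 = - h x + lam * V b n x 1 + mul * V b n (x-1) 0
     + max (dl * V b n x 0) (- c + dl * V b n (x-1) 0)" using VS0_T[of x n] b False by simp
    have E1: "V b (Suc n) (x+1) 0 = - h (x+1) + lam * V b n (x+1) 1 + mul * V b n x 0
     + max (dl * V b n (x+1) 0) (- c + dl * V b n x 0)" using VS0_T[of "x+1" n] b by simp
    have I: "max (dl * V b n x 0) (- c + dl * V b n (x-1) 0) - max (dl * V b n (x+1) 0) (- c + dl * V b n x 0)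
       = min (dl * dd b n x) c + max 0 (dl * pp b n x - c)"
      using ident1[of dl "V b n x 0" c "V b n (x-1) 0" "V b n (x+1) 0"] False
      by (simp add: dd_def pp_def)
    have "dd b (Suc n) x = (h (x+1) - h x) + lam * AA b n x + mul * pp b n x +
       (max (dl * V b n x 0) (- c + dl * V b n (x-1) 0) - max (dl * V b n (x+1) 0) (- c + dl * V b n x 0))"
      unfolding dd_def arg_cong2[where f="(-)", OF E0 E1] using False
      by (simp add: AA_def pp_def dd_def algebra_simps)
    then show ?thesis using I b by (simp add: F_def)
  next
    case b: False
    have E0: "V b (Suc n) x 0 = - h x + lam * V b n x 1 + mul * V b n (x-1) 0
     + dl * V b n x 0" using VS0_F[of x n] b False by simp
    have E1: "V b (Suc n) (x+1) 0 = - h (x+1) + lam * V b n (x+1) 1 + mul * V b n x 0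
     + dl * V b n (x+1) 0" using VS0_F[of "x+1" n] b by simp
    show ?thesis
      unfolding dd_def arg_cong2[where f="(-)", OF E0 E1] using False b
      by (simp add: AA_def pp_def dd_def F_def algebra_simps)
  qed
qed

lemma F_mono:
  assumes "0 \<le> hq" "hq \<le> hq'" "0 \<le> a" "a \<le> a'" "0 \<le> p" "p \<le> p'" "0 \<le> d" "d \<le> d'"
  shows "0 \<le> F b hq a p d \<and> F b hq a p d \<le> F b hq' a' p' d'"
proof -
  have 1: "0 \<le> lam * a" "lam * a \<le> lam * a'" using assms lam_pos by (auto intro: mult_left_mono)
  have 2: "0 \<le> mul * p" "mul * p \<le> mul * p'" using assms mul_pos by (auto intro: mult_left_mono)
  have 3: "0 \<le> dl * d" "dl * d \<le> dl * d'" using assms dl_pos by (auto intro: mult_left_mono)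
  have 4: "min (dl * d) c \<le> min (dl * d') c" "0 \<le> min (dl * d) c" using 3 c_pos by auto
  have "dl * p \<le> dl * p'" using assms dl_pos by (auto intro: mult_left_mono)
  then have 5: "max 0 (dl * p - c) \<le> max 0 (dl * p' - c)" by (simp add: max_def)
  show ?thesis using 1 2 3 4 5 assms by (cases b) (auto simp: F_def)
qed

lemma conc: "\<forall>x. 0 \<le> dd b n x \<and> dd b n x \<le> dd b n (x+1) \<and> 0 \<le> AA b n x \<and> AA b n x \<le> AA b n (x+1)"
proof (induction n)
  case 0 then show ?case by (simp add: dd_def AA_def)
next
  case (Suc n)
  have pm: "0 \<le> pp b n x \<and> pp b n x \<le> pp b n (x+1)" for x
    using Suc.IH[rule_format, of "x-1"] Suc.IH[rule_format, of 0] by (auto simp: pp_def)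
  have D: "0 \<le> dd b (Suc n) x \<and> dd b (Suc n) x \<le> dd b (Suc n) (x+1)" for x
    unfolding dd_Suc using F_mono[of "h (x+1) - h x" "h (x+1+1) - h (x+1)" "AA b n x" "AA b n (x+1)"
        "pp b n x" "pp b n (x+1)" "dd b n x" "dd b n (x+1)" b]
      Suc.IH pm[of x] h_mono[of x "x+1"] h_convex[of x]
    by (simp add: numeral_2_eq_2)
  have A: "0 \<le> AA b (Suc n) x \<and> AA b (Suc n) x \<le> AA b (Suc n) (x+1)" for x
    using A_form[of "V b (Suc n) x 0" "V b (Suc n) (x+1) 0" "V b (Suc n) (x+2) 0" "V b (Suc n) (x+3) 0" R]
      D[of x] D[of "x+1"] D[of "x+2"] R_nonneg
    unfolding AA_def V_Suc1[of b n x] V_Suc1[of b n "x+1"] V_Suc1[of b n "x+1+1"]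
    by (simp add: dd_def numeral_2_eq_2 numeral_3_eq_3)
  show ?case using D A by blast
qed

end



lemma ereal_m1: "(-1::ereal) = ereal (-1)" by (simp add: one_ereal_def)

lemma T_upper: "f k \<le> \<theta> \<Longrightarrow> ereal (real k) \<le> Tsup f \<theta>"
  unfolding Tsup_def by (auto intro!: Sup_upper)

lemma T_mono: assumes m: "\<And>j. f j \<le> f (Suc j)" and k: "ereal (real k) \<le> Tsup f \<theta>"
  shows "f k \<le> \<theta>"
proof (rule ccontr)
  assume "\<not> f k \<le> \<theta>"
  then have "\<forall>j. f j \<le> \<theta> \<longrightarrow> j < k" using lift_Suc_mono_le[of f, OF m] by (meson leI order_trans)
  show False
  proof (cases "{j. f j \<le> \<theta>} = {}")
    case True then show False using k by (simp add: Tsup_def ereal_m1)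
  next
    case False
    have "Sup ((\<lambda>k. ereal (real k)) ` {j. f j \<le> \<theta>}) \<le> ereal (real k - 1)"
      using \<open>\<forall>j. f j \<le> \<theta> \<longrightarrow> j < k\<close> by (auto intro!: Sup_least)
    moreover have "Tsup f \<theta> = Sup ((\<lambda>k. ereal (real k)) ` {j. f j \<le> \<theta>})"
      by (simp only: Tsup_def if_not_P[OF False])
    ultimately have "ereal (real k) \<le> ereal (real k - 1)" using k by (metis order_trans)
    then show False by simp
  qed
qed

lemma T_ge: "-1 \<le> Tsup f \<theta>"
proof (cases "{j. f j \<le> \<theta>} = {}")
  case True then show ?thesis by (simp add: Tsup_def)
next
  case False
  then obtain k where "f k \<le> \<theta>" by auto
  then have "ereal (real k) \<le> Tsup f \<theta>" by (rule T_upper)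
  moreover have "-1 \<le> ereal (real k)" by (simp add: ereal_m1)
  ultimately show ?thesis by (rule order_trans[rotated])
qed

lemma T_cong: "(\<And>k. f k \<le> \<theta> \<longleftrightarrow> g k \<le> \<theta>') \<Longrightarrow> Tsup f \<theta> = Tsup g \<theta>'"
  by (simp add: Tsup_def)

lemma E_0: "-1 \<le> (T::ereal) \<Longrightarrow> ereal (real 0) \<le> 1 + T"
  by (cases T) (auto simp: ereal_m1)
lemma E_down: "-1 \<le> (T::ereal) \<Longrightarrow> ereal (real x) \<le> 1 + T \<Longrightarrow> x \<ge> 1 \<Longrightarrow> ereal (real (x - 1)) \<le> T"
  by (cases T) (auto simp: ereal_m1)
lemma E_up: "-1 \<le> (T::ereal) \<Longrightarrow> ereal (real x) \<le> T \<Longrightarrow> ereal (real (x+1)) \<le> 1 + T"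
  by (cases T) (auto simp: ereal_m1)
lemma E_mono: "ereal (real x) \<le> B \<Longrightarrow> y \<le> x \<Longrightarrow> ereal (real y) \<le> B"
  by (meson ereal_less_eq(3) of_nat_le_iff order_trans)
lemma E_out: assumes T: "-1 \<le> (T::ereal)" and k: "\<not> ereal (real k) \<le> 1 + T"
  shows "\<exists>m\<le>k. ereal (real m) \<le> 1 + T \<and> \<not> ereal (real m) \<le> T"
proof -
  define m where "m = (LEAST j. \<not> ereal (real j) \<le> T)"
  have kk: "\<not> ereal (real k) \<le> T" using T k by (cases T) (auto simp: ereal_m1)
  have m1: "\<not> ereal (real m) \<le> T" unfolding m_def by (rule LeastI[of _ k]) (rule kk)
  have m2: "m \<le> k" unfolding m_def by (rule Least_le) (rule kk)
  have m3: "ereal (real m) \<le> 1 + T"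
  proof (cases m)
    case 0 then show ?thesis using E_0[OF T] by simp
  next
    case (Suc j)
    then have "j < m" by simp
    then have "ereal (real j) \<le> T" unfolding m_def using not_less_Least by blast
    then show ?thesis using E_up[OF T] Suc by simp
  qed
  show ?thesis using m1 m2 m3 by blast
qed



context qm begin

lemma vcmp0: "vi False x 0 \<le> vi True x 0"
  by (rule LIMSEQ_le[OF conv0 conv0]) (use cmp in blast)
lemma vcmp1: "vi False x 1 \<le> vi True x 1"
  by (rule LIMSEQ_le[OF conv1 conv1]) (use cmp in blast)
lemma vup: "vi b x 0 \<le> U"
  by (rule LIMSEQ_le_const2[OF conv0]) (use upper in blast)
lemma vlow: "- h x / \<beta> \<le> vi b x 0"
  by (rule LIMSEQ_le_const[OF conv0]) (use lower in blast)
lemma vconc: "vi b x 0 - vi b (x+1) 0 \<le> vi b (x+1) 0 - vi b (x+1+1) 0"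
proof (rule LIMSEQ_le[OF tendsto_diff[OF conv0 conv0] tendsto_diff[OF conv0 conv0]])
  show "\<exists>N. \<forall>n\<ge>N. V b n x 0 - V b n (x + 1) 0 \<le> V b n (x + 1) 0 - V b n (x + 1 + 1) 0"
    using conc[of b] by (auto simp: dd_def)
qed

lemma main:
  assumes R_le: "R \<le> c / (muh - mul)"
  shows
    "(let v = vinf True lam mul muh R c h;
          vh = vinf False lam mul muh R c h;
          \<Delta> = (\<lambda>x. v x 0 - v (x + 1) 0);
          \<Delta>h = (\<lambda>x. vh x 0 - vh (x + 1) 0);
          Bs = 1 + Tsup \<Delta> (c / (muh - mul));
          Bd = Tsup \<Delta> R;
          Bdh = Tsup \<Delta>h R
      in Bdh = Bd \<and>
         (\<forall>x i. i \<le> 1 \<longrightarrow> ereal (real x) \<le> Bs \<longrightarrow> v x i - vh x i = 0))"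
proof -
  define v where "v = vi True"
  define vh where "vh = vi False"
  define \<Delta> where "\<Delta> x = v x 0 - v (x + 1) 0" for x
  define \<Delta>h where "\<Delta>h x = vh x 0 - vh (x + 1) 0" for x
  define T where "T = Tsup \<Delta> (c / dl)"
  define Rg where "Rg x \<longleftrightarrow> ereal (real x) \<le> 1 + T" for x
  define D where "D x = v x 0 - vh x 0" for x
  define E where "E x = v x 1 - vh x 1" for x
  define W where "W y = w y / \<beta>" for y
  have Rl: "R \<le> c / dl" using R_le by (simp add: dl_def)
  have Dm: "\<Delta> j \<le> \<Delta> (Suc j)" for j using vconc[of True j] by (simp add: \<Delta>_def v_def)
  have Dhm: "\<Delta>h j \<le> \<Delta>h (Suc j)" for j using vconc[of False j] by (simp add: \<Delta>h_def vh_def)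
  have T1: "-1 \<le> T" unfolding T_def by (rule T_ge)
  have R0: "Rg 0" using E_0[OF T1] by (simp add: Rg_def)
  have Rmono: "Rg x \<Longrightarrow> y \<le> x \<Longrightarrow> Rg y" for x y unfolding Rg_def by (rule E_mono)
  have Rslow: "\<Delta> (x - 1) \<le> c / dl" if "Rg x" "x \<noteq> 0" for x
  proof -
    have "ereal (real (x - 1)) \<le> T" using E_down[OF T1] that by (simp add: Rg_def)
    then show ?thesis using T_mono[of \<Delta>, OF Dm] unfolding T_def by blast
  qed
  have Radm: "Rg (x+1)" if "\<Delta> x \<le> R" for x
  proof -
    have "ereal (real x) \<le> T" unfolding T_def using that Rl by (intro T_upper) simp
    then show ?thesis using E_up[OF T1] by (simp add: Rg_def)
  qed
  have D0: "0 \<le> D x" for x using vcmp0 by (simp add: D_def v_def vh_def)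
  have E0: "0 \<le> E x" for x using vcmp1 by (simp add: E_def v_def vh_def)
  have DW: "D x \<le> W x" for x
  proof -
    have "lam * R \<le> R" using lam_pos R_nonneg norm beta_pos mul_pos mul_muh
      by (intro mult_left_le_one_le) auto
    then have "U \<le> (R + c) / \<beta>" using c_pos beta_pos by (simp add: U_def divide_right_mono)
    then show ?thesis using vup[of True x] vlow[of x False]
      by (simp add: D_def W_def w_def v_def vh_def add_divide_distrib diff_divide_distrib)
  qed
  have Wm: "x \<le> y \<Longrightarrow> W x \<le> W y" for x y using w_mono beta_pos by (simp add: W_def divide_right_mono)
  have Wp: "0 \<le> W x" for x using w_pos[of x] beta_pos by (simp add: W_def)
  have Dx: "D x = lam * E x + mul * D (x - 1) + dl * D x" if "Rg x" "x \<noteq> 0" for x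
  proof -
    have "dl * (v (x-1) 0 - v x 0) \<le> c" using Rslow[OF that] dl_pos that(2)
      by (simp add: \<Delta>_def pos_le_divide_eq mult.commute)
    then have mx: "max (dl * v x 0) (- c + dl * v (x - 1) 0) = dl * v x 0" by (simp add: algebra_simps max_def)
    have "v x 0 = - h x + lam * v x 1 + mul * v (x - 1) 0 + dl * v x 0"
      using bell0[of True x] that(2) mx by (simp add: v_def)
    moreover have "vh x 0 = - h x + lam * vh x 1 + mul * vh (x - 1) 0 + dl * vh x 0"
      using bell0[of False x] that(2) by (simp add: vh_def)
    ultimately show ?thesis by (simp add: D_def E_def algebra_simps)
  qed
  have Dz: "D 0 = lam * E 0 + muh * D 0"
    using bell0[of True 0] bell0[of False 0] by (simp add: D_def E_def v_def vh_def algebra_simps)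
  have Eb: "E x \<le> (if \<Delta> x \<le> R then D (x+1) else D x)" for x
  proof -
    have a: "v x 1 = max (R + v (x+1) 0) (v x 0)" using bell1[of True x] by (simp add: v_def)
    have b: "vh x 1 = max (R + vh (x+1) 0) (vh x 0)" using bell1[of False x] by (simp add: vh_def)
    show ?thesis using a b by (auto simp: E_def D_def \<Delta>_def max_def)
  qed
  have claim: "\<forall>x. Rg x \<longrightarrow> D x \<le> Lm^k * W (x + k)" for k
  proof (induction k)
    case 0 then show ?case using DW by simp
  next
    case (Suc k)
    show ?case
    proof (intro allI impI)
      fix x assume rx: "Rg x"
      define K where "K = Lm^k * W (x + 1 + k)"
      have bnd: "D y \<le> K" if "Rg y" "y \<le> x + 1" for y
      proof -
        have "D y \<le> Lm^k * W (y + k)" using Suc.IH that by blast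
        also have "\<dots> \<le> K" unfolding K_def using Lm_pos that
          by (intro mult_left_mono Wm) auto
        finally show ?thesis .
      qed
      have Dk: "D x \<le> K" using bnd[OF rx] by simp
      have Ek: "E x \<le> K"
      proof (cases "\<Delta> x \<le> R")
        case True then show ?thesis using Eb[of x] bnd[OF Radm[OF True]] by simp
      next
        case False then show ?thesis using Eb[of x] Dk by simp
      qed
      have "D x \<le> Lm * K"
      proof (cases "x = 0")
        case True
        have "lam * E 0 \<le> lam * K" using Ek True lam_pos by (intro mult_left_mono) auto
        moreover have "muh * D 0 \<le> muh * K" using Dk True lam_pos mul_pos mul_muh
          by (intro mult_left_mono) auto
        ultimately show ?thesis using Dz True by (simp add: Lm_def distrib_right)
      next
        case False
        have "lam * E x \<le> lam * K" using Ek lam_pos by (intro mult_left_mono) auto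
        moreover have "mul * D (x-1) \<le> mul * K" using bnd[OF Rmono[OF rx]] mul_pos
          by (intro mult_left_mono) auto
        moreover have "dl * D x \<le> dl * K" using Dk dl_pos by (intro mult_left_mono) auto
        moreover have "Lm = lam + mul + dl" by (simp add: Lm_def dl_def)
        ultimately show ?thesis using Dx[OF rx False] by (simp add: distrib_right)
      qed
      then show "D x \<le> Lm ^ Suc k * W (x + Suc k)" by (simp add: K_def)
    qed
  qed
  have Dzero: "D x = 0" if "Rg x" for x
  proof -
    have "(\<lambda>k. (Lm^k * w (x + k)) / \<beta>) \<longlonglongrightarrow> 0 / \<beta>"
      by (intro tendsto_divide summable_LIMSEQ_zero summ) (use beta_pos in auto)
    then have lim: "(\<lambda>k. Lm^k * W (x + k)) \<longlonglongrightarrow> 0" by (simp add: W_def)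
    have "D x \<le> 0"
      by (rule LIMSEQ_le_const[OF lim]) (use claim that in blast)
    then show ?thesis using D0[of x] by simp
  qed
  have Ezero: "E x = 0" if "Rg x" for x
  proof (cases "\<Delta> x \<le> R")
    case True then show ?thesis using Eb[of x] Dzero[OF Radm[OF True]] E0[of x] by simp
  next
    case False then show ?thesis using Eb[of x] Dzero[OF that] E0[of x] by simp
  qed
  have Seq: "\<Delta>h k \<le> R \<longleftrightarrow> \<Delta> k \<le> R" for k
  proof
    assume "\<Delta> k \<le> R"
    have r1: "Rg (k+1)" using Radm[OF \<open>\<Delta> k \<le> R\<close>] .
    have r0: "Rg k" using Rmono[OF r1, of k] by simp
    have "D k = 0" "D (k+1) = 0" using Dzero[OF r0] Dzero[OF r1] by auto
    then have "\<Delta>h k = \<Delta> k" unfolding \<Delta>h_def \<Delta>_def D_def by linarith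
    with \<open>\<Delta> k \<le> R\<close> show "\<Delta>h k \<le> R" by simp
  next
    assume hk: "\<Delta>h k \<le> R"
    have ge: "\<Delta> y \<le> \<Delta>h y" if "Rg y" for y
      using Dzero[OF that] D0[of "y+1"] unfolding \<Delta>h_def \<Delta>_def D_def by linarith
    show "\<Delta> k \<le> R"
    proof (cases "Rg k")
      case True then show ?thesis using ge[OF True] hk by simp
    next
      case False
      then obtain m where m: "m \<le> k" "Rg m" "\<not> ereal (real m) \<le> T"
        using E_out[OF T1] by (auto simp: Rg_def)
      have "\<not> \<Delta> m \<le> c / dl" using m(3) T_upper unfolding T_def by blast
      then have "R < \<Delta>h m" using ge[OF m(2)] Rl by simp
      also have "\<Delta>h m \<le> \<Delta>h k" using lift_Suc_mono_le[of \<Delta>h, OF Dhm m(1)] .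
      finally show ?thesis using hk by simp
    qed
  qed
  have "Tsup \<Delta>h R = Tsup \<Delta> R" by (rule T_cong) (rule Seq)
  moreover have "\<forall>x i. i \<le> 1 \<longrightarrow> ereal (real x) \<le> 1 + Tsup \<Delta> (c / (muh - mul)) \<longrightarrow> v x i - vh x i = 0"
  proof (intro allI impI)
    fix x i :: nat assume i: "i \<le> 1" and x: "ereal (real x) \<le> 1 + Tsup \<Delta> (c / (muh - mul))"
    then have rx: "Rg x" by (simp add: Rg_def T_def dl_def)
    show "v x i - vh x i = 0"
    proof (cases "i = 0")
      case True then show ?thesis using Dzero[OF rx] by (simp add: D_def)
    next
      case False then have "i = 1" using i by simp
      then show ?thesis using Ezero[OF rx] by (simp add: E_def)
    qed
  qed
  moreover have eq1: "(\<lambda>x. v x 0 - v (x + 1) 0) = \<Delta>" by (simp add: fun_eq_iff \<Delta>_def)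
  moreover have eq2: "(\<lambda>x. vh x 0 - vh (x + 1) 0) = \<Delta>h" by (simp add: fun_eq_iff \<Delta>h_def)
  ultimately show ?thesis unfolding Let_def v_def[symmetric] vh_def[symmetric] by metis
qed

end

theorem theorem4:
  fixes lam mul muh R c \<beta> :: real and h :: "nat \<Rightarrow> real"
  assumes lam_pos: "lam > 0"
    and mul_pos: "0 < mul" and mul_muh: "mul < muh"
    and R_nonneg: "R \<ge> 0" and c_pos: "c > 0"
    and beta_pos: "\<beta> > 0" and normalization: "lam + muh + \<beta> = 1"
    and h_mono: "\<And>x y. x \<le> y \<Longrightarrow> h x \<le> h y"
    and h_convex: "\<And>x. h (x + 1) - h x \<le> h (x + 2) - h (x + 1)"
    and h_zero: "h 0 = 0"
    and A1_1: "\<exists>\<theta>>1. \<forall>x>0. h (x + 1) \<le> \<theta> * h x"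
    and A1_2: "\<exists>\<gamma> J. 0 \<le> \<gamma> \<and> \<gamma> < 1 \<and> J > 0 \<and>
                 (\<forall>x. ((lam + muh) / (lam + muh + \<beta>)) ^ J * (R + c + h (x + J))
                        \<le> \<gamma> * (R + c + h x))"
    and R_le: "R \<le> c / (muh - mul)"
  shows
    "(let v = vinf True lam mul muh R c h;
          vh = vinf False lam mul muh R c h;
          \<Delta> = (\<lambda>x. v x 0 - v (x + 1) 0);
          \<Delta>h = (\<lambda>x. vh x 0 - vh (x + 1) 0);
          Bs = 1 + Tsup \<Delta> (c / (muh - mul));
          Bd = Tsup \<Delta> R;
          Bdh = Tsup \<Delta>h R
      in Bdh = Bd \<and>
         (\<forall>x i. i \<le> 1 \<longrightarrow> ereal (real x) \<le> Bs \<longrightarrow> v x i - vh x i = 0))"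
proof -
  interpret qm lam mul muh R c \<beta> h
    by (unfold_locales; fact assms)
  show ?thesis by (rule main[OF R_le])
qed

end
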